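(* Let $(n_1,\dots,n_k)$, $k\ge3$, be an admissible $k$-tuple of positive integers with $[n_1,\dots,n_k]=0$, and suppose there is exactly one index $j\in\{1,\dots,k\}$ with $n_j=1$. Then there are coprime integers $m$ and $n$ such that $[n_1,\dots,n_{j-1},2,n_{j+1},\dots,n_k]=\frac{m^2}{mn+1}$.
   Context: $[c_1,\dots,c_k]=c_1-\cfrac{1}{c_2-\cfrac{1}{\ddots-\cfrac1{c_k}}}$. A $k$-tuple of non-negative integers $(n_1,\dots,n_k)$ is admissible if every denominator appearing in $[n_1,\dots,n_k]$ is positive, i.e. $[n_j,\dots,n_k]>0$ for $j=2,\dots,k$. *)

theory Defs
  imports Complex_Main
begin

text \<open>Hirzebruch--Jung continued fraction [c_1,...,c_k] = c_1 - 1/[c_2,...,c_k].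
  The empty list is never used in the statement; its value is set to 0 by convention.\<close>
fun hj_cf :: "int list \<Rightarrow> rat" where
  "hj_cf [] = 0"
| "hj_cf [c] = of_int c"
| "hj_cf (c # d # cs) = of_int c - 1 / hj_cf (d # cs)"

text \<open>Admissible: non-negative entries and every denominator [n_j,...,n_k], j = 2..k, positive
  (0-based: the suffix starting at index i, for 1 \<le> i < k).\<close>
definition admissible :: "int list \<Rightarrow> bool" where
  "admissible ns \<longleftrightarrow> (\<forall>c \<in> set ns. c \<ge> 0) \<and>
     (\<forall>i. 1 \<le> i \<and> i < length ns \<longrightarrow> hj_cf (drop i ns) > 0)"

end

theory Submission
  imports Defs
begin

fun mm :: "int \<times> int \<times> int \<times> int \<Rightarrow> int \<times> int \<times> int \<times> int \<Rightarrow> int \<times> int \<times> int \<times> int" where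
  "mm (a,b,c,d) (e,f,g,h) = (a*e+b*g, a*f+b*h, c*e+d*g, c*f+d*h)"

fun mat :: "int list \<Rightarrow> int \<times> int \<times> int \<times> int" where
  "mat [] = (1,0,0,1)"
| "mat (c # cs) = mm (c,-1,1,0) (mat cs)"

fun det2 :: "int \<times> int \<times> int \<times> int \<Rightarrow> int" where
  "det2 (a,b,c,d) = a*d - b*c"

lemma mm_assoc: "mm (mm x y) z = mm x (mm y z)"
  by (cases x; cases y; cases z) (simp add: algebra_simps)

lemma mm_id: "mm (1,0,0,1) x = x"
  by (cases x) simp

lemma mat_append: "mat (xs @ ys) = mm (mat xs) (mat ys)"
  by (induction xs) (simp_all add: mm_id mm_assoc)

lemma det_mm: "det2 (mm x y) = det2 x * det2 y"
  by (cases x; cases y) (simp add: algebra_simps)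

lemma det_mat: "det2 (mat xs) = 1"
  by (induction xs) (simp_all add: det_mm)

lemma hj_cons: "t \<noteq> [] \<Longrightarrow> hj_cf (c # t) = of_int c - 1 / hj_cf t"
  by (cases t) auto

lemma col_lemma:
  "cs \<noteq> [] \<Longrightarrow> (\<forall>i. 1 \<le> i \<and> i < length cs \<longrightarrow> hj_cf (drop i cs) \<noteq> 0) \<Longrightarrow>
   mat cs = (a,b,c,d) \<Longrightarrow> c \<noteq> 0 \<and> hj_cf cs = of_int a / of_int c"
proof (induction cs arbitrary: a b c d)
  case Nil
  then show ?case by simp
next
  case (Cons x t)
  show ?case
  proof (cases "t = []")
    case True
    then show ?thesis using Cons.prems by simp
  next
    case False
    obtain a' b' c' d' where m: "mat t = (a',b',c',d')" by (cases "mat t") auto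
    have h: "\<forall>i. 1 \<le> i \<and> i < length t \<longrightarrow> hj_cf (drop i t) \<noteq> 0"
    proof (intro allI impI)
      fix i assume "1 \<le> i \<and> i < length t"
      then show "hj_cf (drop i t) \<noteq> 0" using Cons.prems(2)[rule_format, of "Suc i"] by simp
    qed
    from Cons.IH[OF False h m] have c': "c' \<noteq> 0" and v: "hj_cf t = of_int a' / of_int c'" by auto
    have "hj_cf (drop 1 (x#t)) \<noteq> 0" using Cons.prems(2) False by auto
    then have nz: "hj_cf t \<noteq> 0" by simp
    then have a': "a' \<noteq> 0" using v by auto
    have "mat (x#t) = (x*a' - c', x*b' - d', a', b')" using m by simp
    then have eqs: "a = x*a' - c'" "c = a'" using Cons.prems(3) by auto
    have "hj_cf (x#t) = of_int x - 1 / hj_cf t" using hj_cons[OF False] .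
    also have "\<dots> = (of_int x * of_int a' - of_int c') / of_int a'" using a' c' unfolding v by (simp add: field_simps)
    finally show ?thesis using eqs a' by simp
  qed
qed

lemma mono_lemma:
  assumes "j < length xs" "\<forall>i. 1 \<le> i \<and> i < length xs \<longrightarrow> hj_cf (drop i xs) > 0"
  shows "i \<le> j \<Longrightarrow> hj_cf (drop i (xs[j := xs!j + 1])) \<ge> hj_cf (drop i xs)"
proof (induction "j - i" arbitrary: i)
  case 0
  then have ij: "i = j" by simp
  have d1: "drop j xs = xs!j # drop (Suc j) xs" using assms(1) by (simp add: Cons_nth_drop_Suc)
  have d2: "drop j (xs[j := xs!j + 1]) = (xs!j + 1) # drop (Suc j) xs"
    using assms(1) by (metis Cons_nth_drop_Suc drop_Suc_Cons drop_update_cancel length_list_update lessI nth_list_update_eq)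
  show ?case
  proof (cases "drop (Suc j) xs = []")
    case True then show ?thesis using ij d1 d2 by simp
  next
    case False then show ?thesis using ij d1 d2 by (simp add: hj_cons)
  qed
next
  case (Suc k)
  then have ik: "i < j" "k = j - Suc i" by auto
  have IH: "hj_cf (drop (Suc i) (xs[j := xs!j + 1])) \<ge> hj_cf (drop (Suc i) xs)"
    using Suc.hyps(1)[OF ik(2)] ik by simp
  have pos: "hj_cf (drop (Suc i) xs) > 0" using assms ik by auto
  have il: "i < length xs" "Suc i < length xs" using assms(1) ik by auto
  have d1: "drop i xs = xs!i # drop (Suc i) xs" using il by (simp add: Cons_nth_drop_Suc)
  have d2: "drop i (xs[j := xs!j + 1]) = xs!i # drop (Suc i) (xs[j := xs!j + 1])"
    using il ik by (metis Cons_nth_drop_Suc length_list_update nat_neq_iff nth_list_update_neq)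
  have ne1: "drop (Suc i) xs \<noteq> []" using il by simp
  have ne2: "drop (Suc i) (xs[j := xs!j + 1]) \<noteq> []" using il by simp
  have "1 / hj_cf (drop (Suc i) (xs[j := xs!j + 1])) \<le> 1 / hj_cf (drop (Suc i) xs)"
    using IH pos by (simp add: divide_left_mono)
  then show ?case using d1 d2 ne1 ne2 by (simp add: hj_cons)
qed

theorem lemma2p4:
  fixes ns :: "int list" and j :: nat
  assumes "length ns \<ge> 3"
    and "admissible ns"
    and "\<forall>c \<in> set ns. c > 0"
    and "hj_cf ns = 0"
    and "j < length ns" and "ns ! j = 1"
    and "\<forall>i < length ns. ns ! i = 1 \<longrightarrow> i = j"
  shows "\<exists>m n :: int. coprime m n \<and> m * n + 1 \<noteq> 0 \<and>
           hj_cf (ns[j := 2]) = of_int (m ^ 2) / of_int (m * n + 1)"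
proof -
  have adm: "\<forall>i. 1 \<le> i \<and> i < length ns \<longrightarrow> hj_cf (drop i ns) > 0"
    using assms(2) unfolding admissible_def by blast
  define ns' where "ns' = ns[j := 2]"
  have ns'eq: "ns' = ns[j := ns!j + 1]" using assms(6) ns'_def by simp
  have adm': "\<forall>i. 1 \<le> i \<and> i < length ns' \<longrightarrow> hj_cf (drop i ns') \<noteq> 0"
  proof (intro allI impI)
    fix i assume i: "1 \<le> i \<and> i < length ns'"
    show "hj_cf (drop i ns') \<noteq> 0"
    proof (cases "i \<le> j")
      case True
      then have "hj_cf (drop i ns') \<ge> hj_cf (drop i ns)"
        using mono_lemma[OF assms(5) adm] ns'eq by simp
      moreover have "hj_cf (drop i ns) > 0" using adm i ns'_def by simp
      ultimately show ?thesis by simp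
    next
      case False
      then have "drop i ns' = drop i ns" unfolding ns'_def by simp
      then show ?thesis using adm i ns'_def by (metis length_list_update order_less_irrefl)
    qed
  qed
  define A where "A = take j ns"
  define B where "B = drop (Suc j) ns"
  have nsd: "ns = A @ [1] @ B" unfolding A_def B_def using assms(5,6)
    by (metis append_Cons append_Nil id_take_nth_drop)
  have ns'd: "ns' = A @ [2] @ B" unfolding A_def B_def ns'_def using assms(5)
    by (simp add: upd_conv_take_nth_drop)
  obtain a1 a3 a2 a4 where mA: "mat A = (a1,a3,a2,a4)" by (cases "mat A") auto
  obtain b1 b2 b3 b4 where mB: "mat B = (b1,b2,b3,b4)" by (cases "mat B") auto
  have dA: "a1*a4 - a3*a2 = 1" using det_mat[of A] mA by simp
  define P where "P = a1*(b1-b3) + a3*b1"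
  define Q where "Q = a2*(b1-b3) + a4*b1"
  have mns: "mat ns = (P, a1*(b2-b4) + a3*b2, Q, a2*(b2-b4) + a4*b2)"
    unfolding nsd mat_append P_def Q_def using mA mB by (simp add: algebra_simps)
  have mns': "mat ns' = (P + a1*b1, a1*(2*b2-b4) + a3*b2, Q + a2*b1, a2*(2*b2-b4) + a4*b2)"
    unfolding ns'd mat_append P_def Q_def using mA mB by (simp add: algebra_simps)
  have adm0: "\<forall>i. 1 \<le> i \<and> i < length ns \<longrightarrow> hj_cf (drop i ns) \<noteq> 0" using adm by auto
  have nsne: "ns \<noteq> []" using assms(1) by auto
  from col_lemma[OF nsne adm0 mns] assms(4) have Q0: "Q \<noteq> 0" and P0: "P = 0" by auto
  have b1: "b1 = Q * a1"
  proof -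
    have "a1 * Q - a2 * P = (a1*a4 - a3*a2) * b1" unfolding P_def Q_def by (simp add: algebra_simps)
    then show ?thesis using dA P0 by (simp add: mult.commute)
  qed
  have ns'ne: "ns' \<noteq> []" using nsne ns'_def by simp
  from col_lemma[OF ns'ne adm' mns'] have Q'0: "Q + a2*b1 \<noteq> 0"
    and v: "hj_cf ns' = of_int (P + a1*b1) / of_int (Q + a2*b1)" by auto
  have e1: "P + a1*b1 = Q * a1^2" using P0 b1 by (simp add: power2_eq_square)
  have e2: "Q + a2*b1 = Q * (a1*a2 + 1)" using b1 by (simp add: algebra_simps)
  have nz: "a1*a2 + 1 \<noteq> 0" using Q'0 e2 by auto
  have "hj_cf ns' = of_int (a1^2) / of_int (a1*a2+1)"
    using v e1 e2 Q0 nz by simp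
  moreover have "coprime a1 a2"
  proof (rule coprimeI)
    fix c assume "c dvd a1" "c dvd a2"
    then have "c dvd a1*a4 - a3*a2" by simp
    then show "is_unit c" using dA by simp
  qed
  ultimately show ?thesis using nz ns'_def by blast
qed

end
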